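(* Assume the standing assumptions below, and let $\Delta>0$ be a constant such that for every $N\in 2h^\star\mathbb N$ and every state $\underline\sigma\in\{\pm1\}^{\Lambda_N}$ whose block array is not $(h^\star,\ldots,h^\star)$ one has $E_N(\underline\sigma)-Ne(h^\star)>\Delta$ (such a $\Delta$, independent of $N$, exists by the energy-gap result of Giuliani–Lebowitz–Lieb). Then for every $N\in\mathbb N$ and every state $\underline\sigma\in\{\pm1\}^{\Lambda_N}$ whose block array is not $(h^\star,\ldots,h^\star)$, $$F_N(\underline\sigma)\ge \tilde\Delta:=\frac{\Delta}{2h^\star}.$$ In particular, if $N$ is not a multiple of $2h^\star$, then $F_N(\underline\sigma)\ge\tilde\Delta$ for every $\underline\sigma\in\{\pm1\}^{\Lambda_N}$.
   Context: Fix $p>1$ and $J>0$. For $N\in\mathbb N$ let $\Lambda_N=\mathbb Z/N\mathbb Z$; a state is $\underline\sigma\in\{\pm1\}^{\Lambda_N}$, identified with its $N$-periodic extension to $\mathbb Z$ (so it can also be regarded as a state in $\{\pm1\}^{\Lambda_{MN}}$ for any $M\in\mathbb N$). The energy is $$E_N(\underline\sigma)=-J\sum_{i\in\Lambda_N}\sigma_i\sigma_{i+1}+\sum_{i=1}^N\sum_{j\in\mathbb Z,\,j\neq i}\frac{\sigma_i\sigma_j}{|i-j|^p} =-J\sum_{i\in\Lambda_N}\sigma_i\sigma_{i+1}+\sum_{i,j\in\Lambda_N,\,i\neq j}\sum_{n\in\mathbb Z}\frac{\sigma_i\sigma_j}{|i-j+nN|^p}+\frac{2}{N^{p-1}}\sum_{n\ge1}\frac1{n^p}.$$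 Block arrays: up to a translation (which does not change the energy), every state is described by the cyclic array $(h_1,\ldots,h_M)$ of lengths of its maximal runs of consecutive equal spins (cyclically), consecutive blocks having opposite signs, $h_1+\cdots+h_M=N$ ($M$ even if $M>1$); we write $E_N(h_1,\ldots,h_M)$ for the energy of such a state. For $h\in\mathbb N$, $e(h)=E_{2h}(h,h)/(2h)$ is the $h$-periodic energy per site. Standing assumptions: either $1<p\le2$, or $p>2$ and $J<J_p:=\frac1{\Gamma(p)}\int_0^\infty\frac{\alpha^{p-1}e^{-\alpha}}{(1-e^{-\alpha})^2}d\alpha$; and $e$ has a unique minimizer $h^\star$ on $\mathbb N$. The renormalized energy is $F_N(\underline\sigma)=E_N(\underline\sigma)-Ne(h^\star)$. *)

theory Defs
  imports "HOL-Analysis.Analysis"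
begin

text \<open>A state on \<Lambda>_N, identified with its N-periodic extension to the integers.\<close>
definition is_state :: "nat \<Rightarrow> (int \<Rightarrow> real) \<Rightarrow> bool" where
  "is_state N \<sigma> \<longleftrightarrow> (\<forall>i. \<sigma> i = 1 \<or> \<sigma> i = -1) \<and> (\<forall>i. \<sigma> (i + int N) = \<sigma> i)"

definition energy :: "real \<Rightarrow> real \<Rightarrow> nat \<Rightarrow> (int \<Rightarrow> real) \<Rightarrow> real" where
  "energy p J N \<sigma> =
     - J * (\<Sum>i\<in>{1..int N}. \<sigma> i * \<sigma> (i + 1))
     + (\<Sum>i\<in>{1..int N}. infsum (\<lambda>j. \<sigma> i * \<sigma> j / (real_of_int \<bar>i - j\<bar>) powr p) {j. j \<noteq> i})"

text \<open>The h-periodic striped state (blocks of length h of alternating sign), i.e. block array (h,h) on \<Lambda>_{2h}.\<close>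
definition stripe :: "nat \<Rightarrow> int \<Rightarrow> real" where
  "stripe h i = (if even (i div int h) then 1 else -1)"

definition e_per_site :: "real \<Rightarrow> real \<Rightarrow> nat \<Rightarrow> real" where
  "e_per_site p J h = energy p J (2 * h) (stripe h) / real (2 * h)"

definition J_crit :: "real \<Rightarrow> real" where
  "J_crit p = integral {0<..} (\<lambda>\<alpha>::real. \<alpha> powr (p - 1) * exp (- \<alpha>) / (1 - exp (- \<alpha>))^2) / Gamma p"

definition is_block :: "(int \<Rightarrow> real) \<Rightarrow> int \<Rightarrow> nat \<Rightarrow> bool" where
  "is_block \<sigma> a L \<longleftrightarrow> L \<ge> 1 \<and> \<sigma> (a - 1) \<noteq> \<sigma> a \<and> \<sigma> (a + int L) \<noteq> \<sigma> a
     \<and> (\<forall>k::int. 0 \<le> k \<and> k < int L \<longrightarrow> \<sigma> (a + k) = \<sigma> a)"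

text \<open>The block array is (h,...,h) (with M>1 blocks): the state has sign changes and
  every maximal run has length h.\<close>
definition block_array_all :: "nat \<Rightarrow> (int \<Rightarrow> real) \<Rightarrow> bool" where
  "block_array_all h \<sigma> \<longleftrightarrow> (\<exists>i. \<sigma> i \<noteq> \<sigma> (i + 1)) \<and> (\<forall>a L. is_block \<sigma> a L \<longrightarrow> L = h)"

definition standing_assumptions :: "real \<Rightarrow> real \<Rightarrow> nat \<Rightarrow> bool" where
  "standing_assumptions p J hs \<longleftrightarrow> p > 1 \<and> J > 0 \<and> (p \<le> 2 \<or> (p > 2 \<and> J < J_crit p))
     \<and> hs \<ge> 1 \<and> (\<forall>h::nat. h \<ge> 1 \<and> h \<noteq> hs \<longrightarrow> e_per_site p J h > e_per_site p J hs)"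

definition F_ren :: "real \<Rightarrow> real \<Rightarrow> nat \<Rightarrow> nat \<Rightarrow> (int \<Rightarrow> real) \<Rightarrow> real" where
  "F_ren p J hs N \<sigma> = energy p J N \<sigma> - real N * e_per_site p J hs"

end

theory Submission
  imports Defs
begin

lemma per_iter:
  assumes "\<forall>i. f (i + int N) = (f i :: 'a)"
  shows "f (i + int m * int N) = f i"
proof (induction m arbitrary: i)
  case 0 then show ?case by simp
next
  case (Suc m)
  have "f (i + int (Suc m) * int N) = f ((i + int m * int N) + int N)"
    by (simp add: algebra_simps)
  also have "\<dots> = f (i + int m * int N)" using assms by simp
  finally show ?case using Suc by simp
qed

lemma sum_per:
  assumes "\<forall>i. f (i + int N) = (f i :: real)"
  shows "(\<Sum>i\<in>{1..int (m*N)}. f i) = real m * (\<Sum>i\<in>{1..int N}. f i)"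
proof (induction m)
  case 0 then show ?case by simp
next
  case (Suc m)
  have U: "{1..int (Suc m * N)} = {1..int (m*N)} \<union> {int (m*N) + 1 .. int (m*N) + int N}"
  proof -
    have z: "0 \<le> int (m * N)" by simp
    show ?thesis
    proof (rule set_eqI, rule iffI)
      fix x assume "x \<in> {1..int (Suc m * N)}"
      then show "x \<in> {1..int (m*N)} \<union> {int (m*N) + 1 .. int (m*N) + int N}" by (auto simp: algebra_simps)
    next
      fix x assume "x \<in> {1..int (m*N)} \<union> {int (m*N) + 1 .. int (m*N) + int N}"
      then show "x \<in> {1..int (Suc m * N)}" using z by (auto simp del: of_nat_mult simp: algebra_simps)
    qed
  qed
  have D: "{1..int (m*N)} \<inter> {int (m*N) + 1 .. int (m*N) + int N} = {}" by auto
  have S: "(\<Sum>i\<in>{int (m*N) + 1 .. int (m*N) + int N}. f i) = (\<Sum>i\<in>{1..int N}. f i)"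
  proof -
    have "(\<Sum>i\<in>{int (m*N) + 1 .. int (m*N) + int N}. f i)
        = (\<Sum>i\<in>(\<lambda>i. i + int (m*N)) ` {1..int N}. f i)"
      by (intro sum.cong) (auto simp: image_iff intro!: bexI[where x="_ - int (m*N)"])
    also have "\<dots> = (\<Sum>i\<in>{1..int N}. f (i + int (m*N)))"
      by (subst sum.reindex) (auto simp: inj_on_def)
    also have "\<dots> = (\<Sum>i\<in>{1..int N}. f i)"
      using per_iter[OF assms] by simp
    finally show ?thesis .
  qed
  show ?case unfolding U
    by (subst sum.union_disjoint) (use D S Suc in \<open>auto simp: algebra_simps\<close>)
qed

lemma energy_mult:
  assumes "is_state N \<sigma>"
  shows "energy p J (m*N) \<sigma> = real m * energy p J N \<sigma>"
proof -
  have per: "\<forall>i. \<sigma> (i + int N) = \<sigma> i" using assms unfolding is_state_def by blast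
  define g where "g i = \<sigma> i * \<sigma> (i + 1)" for i
  define f where "f i = infsum (\<lambda>j. \<sigma> i * \<sigma> j / (real_of_int \<bar>i - j\<bar>) powr p) {j. j \<noteq> i}" for i
  have gp: "\<forall>i. g (i + int N) = g i" unfolding g_def using per
    by (metis add.commute add.left_commute)
  have fp: "\<forall>i. f (i + int N) = f i"
  proof
    fix i
    have b: "bij_betw (\<lambda>j. j + int N) {j. j \<noteq> i} {j. j \<noteq> i + int N}"
      by (rule bij_betwI[where g="\<lambda>j. j - int N"]) auto
    have "f i = infsum (\<lambda>j. \<sigma> (i + int N) * \<sigma> (j + int N) / (real_of_int \<bar>(i + int N) - (j + int N)\<bar>) powr p) {j. j \<noteq> i}"
      unfolding f_def using per by simp
    also have "\<dots> = f (i + int N)" unfolding f_def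
      by (rule infsum_reindex_bij_betw[OF b, where f="\<lambda>j. \<sigma> (i + int N) * \<sigma> j / (real_of_int \<bar>(i + int N) - j\<bar>) powr p"])
    finally show "f (i + int N) = f i" by simp
  qed
  have e: "energy p J n \<sigma> = - J * (\<Sum>i\<in>{1..int n}. g i) + (\<Sum>i\<in>{1..int n}. f i)" for n
    unfolding energy_def f_def g_def by simp
  show ?thesis unfolding e sum_per[OF gp] sum_per[OF fp] by (simp add: algebra_simps)
qed

lemma state_mult:
  assumes "is_state N \<sigma>"
  shows "is_state (m*N) \<sigma>"
proof -
  have per: "\<forall>i. \<sigma> (i + int N) = \<sigma> i" using assms unfolding is_state_def by blast
  have "\<sigma> (i + int (m*N)) = \<sigma> i" for i
    using per_iter[OF per, of i m] by simp
  then show ?thesis using assms unfolding is_state_def by blast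
qed

lemma block_of_start:
  assumes st: "is_state N \<sigma>" and N: "N > 0" and ba: "block_array_all h \<sigma>"
    and a: "\<sigma> (a - 1) \<noteq> \<sigma> a"
  shows "(\<forall>k::int. 0 \<le> k \<and> k < int h \<longrightarrow> \<sigma> (a + k) = \<sigma> a) \<and> \<sigma> (a + int h) \<noteq> \<sigma> a"
proof -
  have per: "\<forall>i. \<sigma> (i + int N) = \<sigma> i" using st unfolding is_state_def by blast
  have N2: "N \<ge> 2"
  proof (rule ccontr)
    assume "\<not> N \<ge> 2" then have "N = 1" using N by simp
    then show False using per[rule_format, of "a - 1"] a by simp
  qed
  define P where "P k \<longleftrightarrow> k \<ge> 1 \<and> \<sigma> (a + int k) \<noteq> \<sigma> a" for k :: nat
  have ex: "P (N - 1)" unfolding P_def using N2 per[rule_format, of "a - 1"] a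
    by (simp add: of_nat_diff algebra_simps)
  define L where "L = (LEAST k. P k)"
  have PL: "P L" unfolding L_def by (rule LeastI[of P, OF ex])
  have nl: "\<sigma> (a + k) = \<sigma> a" if "0 \<le> k" "k < int L" for k
  proof (cases "k = 0")
    case True then show ?thesis by simp
  next
    case False
    have "\<not> P (nat k)" unfolding L_def
      by (rule not_less_Least) (use that in \<open>simp add: L_def\<close>)
    then show ?thesis using that False unfolding P_def by simp
  qed
  have "is_block \<sigma> a L" unfolding is_block_def using PL nl a unfolding P_def by auto
  then have "L = h" using ba unfolding block_array_all_def by blast
  then show ?thesis using nl PL unfolding P_def by auto
qed

lemma pm1: "is_state N \<sigma> \<Longrightarrow> \<sigma> i = 1 \<or> \<sigma> i = -1"
  unfolding is_state_def by blast

lemma ba_dvd: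
  assumes st: "is_state N \<sigma>" and N: "N > 0" and ba: "block_array_all h \<sigma>" and h: "h \<ge> 1"
  shows "(2*h) dvd N"
proof -
  have per: "\<forall>i. \<sigma> (i + int N) = \<sigma> i" using st unfolding is_state_def by blast
  obtain i0 where i0: "\<sigma> i0 \<noteq> \<sigma> (i0 + 1)" using ba unfolding block_array_all_def by blast
  define a0 where "a0 = i0 + 1"
  have a0: "\<sigma> (a0 - 1) \<noteq> \<sigma> a0" using i0 unfolding a0_def by simp
  have step: "\<sigma> (a0 + int (q*h) - 1) \<noteq> \<sigma> (a0 + int (q*h)) \<and> \<sigma> (a0 + int (q*h)) = (-1)^q * \<sigma> a0" for q
  proof (induction q)
    case 0 then show ?case using a0 by simp
  next
    case (Suc q)
    define a where "a = a0 + int (q*h)"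
    have B: "(\<forall>k::int. 0 \<le> k \<and> k < int h \<longrightarrow> \<sigma> (a + k) = \<sigma> a) \<and> \<sigma> (a + int h) \<noteq> \<sigma> a"
      using block_of_start[OF st N ba] Suc unfolding a_def by blast
    have e: "a0 + int (Suc q * h) = a + int h" unfolding a_def by simp
    have "\<sigma> (a + int h - 1) = \<sigma> a" using B[THEN conjunct1, rule_format, of "int h - 1"] h
      by (simp add: algebra_simps)
    moreover have "\<sigma> (a + int h) = - \<sigma> a" using B pm1[OF st, of a] pm1[OF st, of "a + int h"] by auto
    ultimately show ?case unfolding e using B Suc unfolding a_def by auto
  qed
  have form: "\<sigma> (a0 + int n) = (-1)^(n div h) * \<sigma> a0" for n
  proof -
    define q where "q = n div h"
    define k where "k = n mod h"
    have n: "n = q*h + k" unfolding q_def k_def by simp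
    have kh: "k < h" unfolding k_def using h by simp
    have B: "(\<forall>k::int. 0 \<le> k \<and> k < int h \<longrightarrow> \<sigma> (a0 + int (q*h) + k) = \<sigma> (a0 + int (q*h)))"
      using block_of_start[OF st N ba] step[of q] by blast
    have "\<sigma> (a0 + int n) = \<sigma> (a0 + int (q*h) + int k)" unfolding n by (simp add: algebra_simps)
    also have "\<dots> = \<sigma> (a0 + int (q*h))" using B kh by simp
    finally show ?thesis using step[of q] unfolding q_def by simp
  qed
  have s0: "\<sigma> a0 \<noteq> 0" using pm1[OF st, of a0] by auto
  have e1: "(-1::real)^(N div h) = 1"
    using form[of N] per[rule_format, of a0] s0 by simp
  have e2: "(-1::real)^((N-1) div h) = -1"
  proof -
    have "\<sigma> (a0 + int (N - 1)) = \<sigma> (a0 - 1)"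
      using per[rule_format, of "a0 - 1"] N by (simp add: of_nat_diff algebra_simps)
    then have "\<sigma> (a0 + int (N-1)) = - \<sigma> a0" using a0 pm1[OF st, of a0] pm1[OF st, of "a0 - 1"] by auto
    then have "(-1) * \<sigma> a0 = (-1::real)^((N-1) div h) * \<sigma> a0" using form[of "N-1"] by simp
    then have "-1 = (-1::real)^((N-1) div h)" by (simp only: mult_right_cancel[OF s0])
    then show ?thesis by simp
  qed
  have ev: "even (N div h)" using e1 by (metis neg_one_odd_power one_neq_neg_one)
  have od: "odd ((N-1) div h)" using e2 by (metis neg_one_even_power one_neq_neg_one)
  have "N mod h = 0"
  proof (rule ccontr)
    assume nz: "N mod h \<noteq> 0"
    have "(N - 1) div h = N div h"
    proof -
      have "N = (N div h)*h + N mod h" by simp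
      then have "N - 1 = (N div h)*h + (N mod h - 1)" using nz by linarith
      moreover have "N mod h - 1 < h" using h by (simp add: less_imp_diff_less)
      moreover have "((N div h)*h + (N mod h - 1)) div h = N div h"
        using \<open>N mod h - 1 < h\<close> h by simp
      ultimately show ?thesis by simp
    qed
    then show False using ev od by simp
  qed
  then have "N = (N div h) * h" by (metis mod_eq_0_iff_dvd dvd_div_mult_self)
  then show ?thesis using ev by (metis dvd_mult_div_cancel mult.commute mult_dvd_mono dvd_refl)
qed

theorem mainTheorem1:
  fixes p J \<Delta> :: real and hs :: nat
  assumes "standing_assumptions p J hs"
    and "\<Delta> > 0"
    and "\<forall>N::nat. N > 0 \<and> (2 * hs) dvd N \<longrightarrow>
           (\<forall>\<sigma>. is_state N \<sigma> \<and> \<not> block_array_all hs \<sigma> \<longrightarrow>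
              energy p J N \<sigma> - real N * e_per_site p J hs > \<Delta>)"
  shows "(\<forall>N::nat. N > 0 \<longrightarrow> (\<forall>\<sigma>. is_state N \<sigma> \<and> \<not> block_array_all hs \<sigma> \<longrightarrow>
            F_ren p J hs N \<sigma> \<ge> \<Delta> / real (2 * hs)))
       \<and> (\<forall>N::nat. N > 0 \<and> \<not> (2 * hs) dvd N \<longrightarrow> (\<forall>\<sigma>. is_state N \<sigma> \<longrightarrow>
            F_ren p J hs N \<sigma> \<ge> \<Delta> / real (2 * hs)))"
proof -
  have h: "hs \<ge> 1" using assms(1) unfolding standing_assumptions_def by blast
  have P1: "F_ren p J hs N \<sigma> \<ge> \<Delta> / real (2 * hs)"
    if N: "N > 0" and st: "is_state N \<sigma>" and nb: "\<not> block_array_all hs \<sigma>" for N \<sigma>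
  proof -
    define M where "M = 2*hs"
    have M: "M > 0" using h unfolding M_def by simp
    have "energy p J (M*N) \<sigma> - real (M*N) * e_per_site p J hs > \<Delta>"
      using assms(3)[rule_format, of "M*N" \<sigma>] N M state_mult[OF st, of M] nb
      unfolding M_def by simp
    then have "real M * F_ren p J hs N \<sigma> > \<Delta>"
      unfolding energy_mult[OF st] F_ren_def by (simp add: algebra_simps)
    then have "F_ren p J hs N \<sigma> > \<Delta> / real M" using M
      by (simp add: divide_less_eq mult.commute)
    then show ?thesis unfolding M_def by simp
  qed
  show ?thesis
  proof (intro conjI allI impI)
    fix N \<sigma> assume "0 < N" "is_state N \<sigma> \<and> \<not> block_array_all hs \<sigma>"
    then show "F_ren p J hs N \<sigma> \<ge> \<Delta> / real (2 * hs)" using P1 by blast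
  next
    fix N \<sigma> assume a: "0 < N \<and> \<not> (2*hs) dvd N" and st: "is_state N \<sigma>"
    then have "\<not> block_array_all hs \<sigma>" using ba_dvd[OF st _ _ h] by blast
    then show "F_ren p J hs N \<sigma> \<ge> \<Delta> / real (2 * hs)" using P1 a st by blast
  qed
qed

end
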